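(* Let $K$ be a field, $\mathcal A$ a $K$-algebra, $\vartheta$ any one of the four types (left, right, pre-two-sided, two-sided), $M$ a $\vartheta$-Mathieu subspace of $\mathcal A$, and $a\in\mathcal A$ algebraic over $K$. Then $a\in\sqrt M$ if and only if $(a^N)_\vartheta\subseteq M$ for some integer $N\ge 0$.
   Context: All algebras are associative and unital. For a subset $S\subseteq\mathcal A$, $\sqrt S$ is the set of $a\in\mathcal A$ with $a^m\in S$ for all sufficiently large $m$. Let $M$ be a $K$-subspace of $\mathcal A$. $M$ is a left (resp. right) Mathieu subspace if whenever $a\in\mathcal A$ satisfies $a^m\in M$ for all $m\ge1$, then for every $b\in\mathcal A$ there is $N$ with $ba^m\in M$ (resp. $a^mb\in M$) for all $m\ge N$; pre-two-sided if it is both left and right; two-sided if whenever $a^m\in M$ for all $m\ge1$, for all $b,c\in\mathcal A$ there is $N$ with $ba^mc\in M$ for all $m\ge N$. For $x\in\mathcal A$: $(x)_\vartheta$ is $\mathcal Ax$ if $\vartheta$ = left, $x\mathcal A$ if $\vartheta$ = right, the two-sided ideal generated by $x$ if $\vartheta$ = two-sided, and $x\mathcal A+\mathcal Ax$ if $\vartheta$ = pre-two-sided. *)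

theory Defs
  imports Main "HOL-Computational_Algebra.Polynomial"
begin

definition K_algebra :: "('k::field \<Rightarrow> 'b::ring_1 \<Rightarrow> 'b) \<Rightarrow> bool" where
  "K_algebra scale \<longleftrightarrow> vector_space scale \<and>
     (\<forall>c x y. scale c (x * y) = scale c x * y \<and> scale c (x * y) = x * scale c y)"

definition algebraic_over :: "('k::field \<Rightarrow> 'b::ring_1 \<Rightarrow> 'b) \<Rightarrow> 'b \<Rightarrow> bool" where
  "algebraic_over scale a \<longleftrightarrow>
     (\<exists>p :: 'k poly. p \<noteq> 0 \<and> (\<Sum>i\<le>degree p. scale (coeff p i) (a ^ i)) = 0)"

definition radical :: "'b::monoid_mult set \<Rightarrow> 'b set" where
  "radical S = {a. \<exists>N. \<forall>m\<ge>N. a ^ m \<in> S}"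

datatype mtype = LeftT | RightT | PreTwoSidedT | TwoSidedT

definition mathieu :: "mtype \<Rightarrow> 'b::ring_1 set \<Rightarrow> bool" where
  "mathieu \<theta> M \<longleftrightarrow> (\<forall>a. (\<forall>m\<ge>1. a ^ m \<in> M) \<longrightarrow>
     (case \<theta> of
        LeftT \<Rightarrow> (\<forall>b. \<exists>N. \<forall>m\<ge>N. b * a ^ m \<in> M)
      | RightT \<Rightarrow> (\<forall>b. \<exists>N. \<forall>m\<ge>N. a ^ m * b \<in> M)
      | PreTwoSidedT \<Rightarrow> (\<forall>b. \<exists>N. \<forall>m\<ge>N. b * a ^ m \<in> M) \<and>
                        (\<forall>b. \<exists>N. \<forall>m\<ge>N. a ^ m * b \<in> M)
      | TwoSidedT \<Rightarrow> (\<forall>b c. \<exists>N. \<forall>m\<ge>N. b * a ^ m * c \<in> M)))"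

text \<open>The ideal (x) of the given type. The two-sided ideal generated by x in a
unital algebra is the set of finite sums of elements b x c.\<close>
definition gen_ideal :: "mtype \<Rightarrow> 'b::ring_1 \<Rightarrow> 'b set" where
  "gen_ideal \<theta> x = (case \<theta> of
       LeftT \<Rightarrow> {b * x | b. True}
     | RightT \<Rightarrow> {x * b | b. True}
     | PreTwoSidedT \<Rightarrow> {x * b + c * x | b c. True}
     | TwoSidedT \<Rightarrow> {y. \<exists>(n::nat) b c. y = (\<Sum>i<n. b i * x * c i)})"

end

theory Submission
  imports Defs
begin

lemma KA_module: "K_algebra scale \<Longrightarrow> module scale"
  unfolding K_algebra_def vector_space_def module_def by blast

lemma KA_lin:
  assumes "K_algebra scale"
  shows "b * scale k x * c = scale k (b * x * c)"
  using assms unfolding K_algebra_def by metis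

lemma KA_lin_sum:
  assumes "K_algebra scale"
  shows "b * (\<Sum>i\<in>I. scale (f i) (g i)) * c = (\<Sum>i\<in>I. scale (f i) (b * g i * c))"
  by (simp add: sum_distrib_left sum_distrib_right KA_lin[OF assms])

lemma key_identity:
  fixes scale :: "'k::field \<Rightarrow> 'b::ring_1 \<Rightarrow> 'b"
  assumes KA: "K_algebra scale" and alg: "algebraic_over scale a"
  shows "\<exists>r d f. a ^ r = (\<Sum>i\<in>{r<..d}. scale (f i) (a ^ i))"
proof -
  interpret module scale using KA_module[OF KA] .
  obtain p :: "'k poly" where p: "p \<noteq> 0" and z: "(\<Sum>i\<le>degree p. scale (coeff p i) (a ^ i)) = 0"
    using alg unfolding algebraic_over_def by blast
  define r where "r = (LEAST i. coeff p i \<noteq> 0)"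
  have cr: "coeff p r \<noteq> 0" unfolding r_def
    by (rule LeastI[of _ "degree p"]) (simp add: p)
  have below: "coeff p i = 0" if "i < r" for i
    using that not_less_Least r_def by blast
  have rd: "r \<le> degree p" using cr le_degree by blast
  have split: "{..degree p} = {..<r} \<union> {r} \<union> {r<..degree p}" using rd by auto
  have "(\<Sum>i\<le>degree p. scale (coeff p i) (a ^ i)) =
     (\<Sum>i\<in>{..<r}. scale (coeff p i) (a ^ i)) + scale (coeff p r) (a ^ r) +
     (\<Sum>i\<in>{r<..degree p}. scale (coeff p i) (a ^ i))"
    unfolding split by (subst sum.union_disjoint; auto)+
  also have "(\<Sum>i\<in>{..<r}. scale (coeff p i) (a ^ i)) = 0"
    by (rule sum.neutral) (simp add: below)
  finally have e: "scale (coeff p r) (a ^ r) = - (\<Sum>i\<in>{r<..degree p}. scale (coeff p i) (a ^ i))"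
    using z by (simp add: eq_neg_iff_add_eq_0)
  have "a ^ r = scale (inverse (coeff p r)) (scale (coeff p r) (a ^ r))"
    using cr by simp
  also have "\<dots> = (\<Sum>i\<in>{r<..degree p}. scale (- inverse (coeff p r) * coeff p i) (a ^ i))"
    unfolding e scale_minus_right scale_sum_right by (simp add: sum_negf)
  finally have "a ^ r = (\<Sum>i\<in>{r<..degree p}. scale (- inverse (coeff p r) * coeff p i) (a ^ i))" .
  then show ?thesis by (intro exI[of _ r] exI[of _ "degree p"] exI[of _ "\<lambda>i. - inverse (coeff p r) * coeff p i"])
qed

lemma descent:
  fixes scale :: "'k::field \<Rightarrow> 'b::ring_1 \<Rightarrow> 'b"
  assumes KA: "K_algebra scale" and sub: "module.subspace scale M"
    and id: "a ^ r = (\<Sum>i\<in>{r<..d}. scale (f i) (a ^ i))"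
    and ev: "\<forall>k\<ge>N. b * a ^ k * c \<in> M"
  shows "b * a ^ r * c \<in> M"
proof -
  interpret module scale using KA_module[OF KA] .
  have gen: "b * a ^ j * c = (\<Sum>i\<in>{r<..d}. scale (f i) (b * a ^ (j - r + i) * c))" if "j \<ge> r" for j
  proof -
    have "b * a ^ j * c = (b * a ^ (j - r)) * a ^ r * c"
      using that by (simp add: mult.assoc power_add[symmetric])
    also have "\<dots> = (\<Sum>i\<in>{r<..d}. scale (f i) ((b * a ^ (j - r)) * a ^ i * c))"
      unfolding id by (rule KA_lin_sum[OF KA])
    also have "\<dots> = (\<Sum>i\<in>{r<..d}. scale (f i) (b * a ^ (j - r + i) * c))"
      by (simp add: mult.assoc power_add)
    finally show ?thesis .
  qed
  have "\<forall>j\<ge>r. j + n \<ge> N \<longrightarrow> b * a ^ j * c \<in> M" for n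
  proof (induction n)
    case 0 then show ?case using ev by simp
  next
    case (Suc n)
    show ?case
    proof (intro allI impI)
      fix j assume j: "j \<ge> r" "N \<le> j + Suc n"
      have "(\<Sum>i\<in>{r<..d}. scale (f i) (b * a ^ (j - r + i) * c)) \<in> M"
      proof (rule subspace_sum[OF sub])
        fix i assume "i \<in> {r<..d}"
        then have "j - r + i \<ge> r" "N \<le> (j - r + i) + n" using j by auto
        then show "scale (f i) (b * a ^ (j - r + i) * c) \<in> M"
          using Suc.IH subspace_scale[OF sub] by blast
      qed
      then show "b * a ^ j * c \<in> M" using gen[OF j(1)] by simp
    qed
  qed
  from this[of N] show ?thesis by simp
qed

lemma eventual:
  assumes t: "1 \<le> (t::nat)" and h: "\<forall>i<t. \<exists>N. \<forall>m\<ge>N. Q (t * m + i)"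
  shows "\<exists>N. \<forall>k\<ge>N. Q k"
proof -
  obtain Nf where Nf: "\<forall>i<t. \<forall>m\<ge>Nf i. Q (t * m + i)"
    using h by metis
  define S where "S = (\<Sum>i<t. Nf i)"
  have "Q k" if "k \<ge> t * S" for k
  proof -
    have km: "k mod t < t" using t by simp
    have "S \<le> k div t" using that t
      by (metis div_le_mono mult.commute nonzero_mult_div_cancel_right not_one_le_zero)
    moreover have "Nf (k mod t) \<le> S" unfolding S_def
      using km by (intro member_le_sum) auto
    ultimately have "Q (t * (k div t) + k mod t)" using Nf km le_trans by blast
    then show ?thesis by simp
  qed
  then show ?thesis by blast
qed


lemma pow_shift:
  fixes a b c :: "'a::monoid_mult"
  shows "b * a ^ i * (a ^ t) ^ m * c = b * a ^ (t * m + i) * c"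
proof -
  have "a ^ (t * m + i) = a ^ (i + t * m)" by (simp add: add.commute)
  also have "\<dots> = a ^ i * a ^ (t * m)" by (rule power_add)
  also have "a ^ (t * m) = (a ^ t) ^ m" by (rule power_mult)
  finally have "a ^ (t * m + i) = a ^ i * (a ^ t) ^ m" .
  then show ?thesis by (simp add: mult.assoc)
qed

theorem theorem3p10:
  fixes scale :: "'k::field \<Rightarrow> 'b::ring_1 \<Rightarrow> 'b"
    and \<theta> :: mtype and M :: "'b set" and a :: 'b
  assumes "K_algebra scale"
    and "module.subspace scale M"
    and "mathieu \<theta> M"
    and "algebraic_over scale a"
  shows "a \<in> radical M \<longleftrightarrow> (\<exists>N::nat. gen_ideal \<theta> (a ^ N) \<subseteq> M)"
proof
  assume "\<exists>N. gen_ideal \<theta> (a ^ N) \<subseteq> M"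
  then obtain N where N: "gen_ideal \<theta> (a ^ N) \<subseteq> M" by blast
  have "a ^ m \<in> M" if "m \<ge> N" for m
  proof -
    have e1: "a ^ m = a ^ (m - N) * a ^ N" and e2: "a ^ m = a ^ N * a ^ (m - N)"
      using that by (simp_all add: power_add[symmetric])
    have "a ^ m \<in> gen_ideal \<theta> (a ^ N)"
    proof (cases \<theta>)
      case LeftT then show ?thesis unfolding gen_ideal_def using e1 by auto
    next
      case RightT then show ?thesis unfolding gen_ideal_def using e2 by auto
    next
      case PreTwoSidedT
      have "a ^ m = a ^ N * a ^ (m - N) + 0 * a ^ N" using e2 by simp
      then show ?thesis unfolding gen_ideal_def PreTwoSidedT mtype.case by (intro CollectI exI conjI TrueI)
    next
      case TwoSidedT
      have "a ^ m = (\<Sum>i<(1::nat). (\<lambda>_. a ^ (m - N)) i * a ^ N * (\<lambda>_. 1) i)"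
        using e1 by simp
      then show ?thesis unfolding gen_ideal_def TwoSidedT mtype.case by (intro CollectI exI)
    qed
    then show ?thesis using N by blast
  qed
  then show "a \<in> radical M" unfolding radical_def by blast
next
  assume "a \<in> radical M"
  then obtain N0 where N0: "\<forall>m\<ge>N0. a ^ m \<in> M" unfolding radical_def by blast
  interpret module scale using KA_module[OF assms(1)] .
  define t where "t = Suc N0"
  have t1: "1 \<le> t" unfolding t_def by simp
  have xp: "\<forall>m\<ge>1. (a ^ t) ^ m \<in> M"
  proof (intro allI impI)
    fix m :: nat assume "1 \<le> m"
    then have "t * m \<ge> N0" unfolding t_def
      by (metis le_SucI mult.right_neutral mult_le_mono order_refl)
    then show "(a ^ t) ^ m \<in> M" using N0 by (simp add: power_mult[symmetric])
  qed
  obtain r d f where id: "a ^ r = (\<Sum>i\<in>{r<..d}. scale (f i) (a ^ i))"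
    using key_identity[OF assms(1,4)] by blast
  have main: "b * a ^ r * c \<in> M"
    if h: "\<forall>i<t. \<exists>N. \<forall>m\<ge>N. b * a ^ i * (a ^ t) ^ m * c \<in> M" for b c
  proof -
    have "\<forall>i<t. \<exists>N. \<forall>m\<ge>N. b * a ^ (t * m + i) * c \<in> M"
      using h by (simp add: pow_shift)
    then obtain N where "\<forall>k\<ge>N. b * a ^ k * c \<in> M"
      using eventual[OF t1, where Q="\<lambda>k. b * a ^ k * c \<in> M"] by blast
    then show ?thesis using descent[OF assms(1,2) id] by blast
  qed
  have mth: "case \<theta> of
        LeftT \<Rightarrow> (\<forall>b. \<exists>N. \<forall>m\<ge>N. b * (a ^ t) ^ m \<in> M)
      | RightT \<Rightarrow> (\<forall>b. \<exists>N. \<forall>m\<ge>N. (a ^ t) ^ m * b \<in> M)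
      | PreTwoSidedT \<Rightarrow> (\<forall>b. \<exists>N. \<forall>m\<ge>N. b * (a ^ t) ^ m \<in> M) \<and>
                        (\<forall>b. \<exists>N. \<forall>m\<ge>N. (a ^ t) ^ m * b \<in> M)
      | TwoSidedT \<Rightarrow> (\<forall>b c. \<exists>N. \<forall>m\<ge>N. b * (a ^ t) ^ m * c \<in> M)"
    using assms(3) xp unfolding mathieu_def by blast
  have L: "b * a ^ r \<in> M" if "\<forall>b. \<exists>N. \<forall>m\<ge>N. b * (a ^ t) ^ m \<in> M" for b
  proof -
    have "\<forall>i<t. \<exists>N. \<forall>m\<ge>N. b * a ^ i * (a ^ t) ^ m * 1 \<in> M"
      using that by simp
    from main[OF this] show ?thesis by simp
  qed
  have R: "a ^ r * b \<in> M" if hR: "\<forall>b. \<exists>N. \<forall>m\<ge>N. (a ^ t) ^ m * b \<in> M" for b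
  proof -
    have "\<forall>i<t. \<exists>N. \<forall>m\<ge>N. 1 * a ^ i * (a ^ t) ^ m * b \<in> M"
    proof (intro allI impI)
      fix i
      obtain N where "\<forall>m\<ge>N. (a ^ t) ^ m * (a ^ i * b) \<in> M" using hR by blast
      moreover have "(a ^ t) ^ m * (a ^ i * b) = 1 * a ^ i * (a ^ t) ^ m * b" for m
      proof -
        have "(a ^ t) ^ m * (a ^ i * b) = a ^ (t * m + i) * b"
          by (simp only: power_mult[symmetric] power_add mult.assoc)
        then show ?thesis using pow_shift[of 1 a i t m b] by simp
      qed
      ultimately show "\<exists>N. \<forall>m\<ge>N. 1 * a ^ i * (a ^ t) ^ m * b \<in> M" by auto
    qed
    from main[OF this] show ?thesis by simp
  qed
  show "\<exists>N. gen_ideal \<theta> (a ^ N) \<subseteq> M"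
  proof (rule exI[of _ r], cases \<theta>)
    case LeftT then show "gen_ideal \<theta> (a ^ r) \<subseteq> M"
      using mth L unfolding gen_ideal_def by auto
  next
    case RightT then show "gen_ideal \<theta> (a ^ r) \<subseteq> M"
      using mth R unfolding gen_ideal_def by auto
  next
    case PreTwoSidedT then show "gen_ideal \<theta> (a ^ r) \<subseteq> M"
      using mth L R subspace_add[OF assms(2)] unfolding gen_ideal_def by auto
  next
    case TwoSidedT
    have "b * a ^ r * c \<in> M" for b c
    proof -
      have "\<forall>i<t. \<exists>N. \<forall>m\<ge>N. b * a ^ i * (a ^ t) ^ m * c \<in> M"
        using mth TwoSidedT by simp
      then show ?thesis by (rule main)
    qed
    then show "gen_ideal \<theta> (a ^ r) \<subseteq> M"
      using TwoSidedT unfolding gen_ideal_def by (auto intro!: subspace_sum[OF assms(2)])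
  qed
qed

end
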